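(* Let $h,n\geq2$. (i) If $U\leq G$ is regular maximal, then every $U$-symmetric social preference function $F$ satisfies $G(F)=U$. (ii) Every regular maximal subgroup of $G$ is a symmetry group with respect to $(h,n)$, and every symmetry group with respect to $(h,n)$ is regular. In particular, the set of symmetry groups with respect to $(h,n)$ is nonempty.
   Context: Permutations compose as $(\sigma\tau)(x)=\sigma(\tau(x))$. Let $G=S_h\times S_n$ and $\mathcal{P}=(S_n)^h$ (preference profiles), with $G$ acting by $(p^{(\varphi,\psi)})_i=\psi\,p_{\varphi^{-1}(i)}$. A subgroup $U\leq G$ is regular if for every $p\in\mathcal{P}$, $\mathrm{Stab}_U(p)=\{g\in U:p^g=p\}\subseteq S_h\times\{id\}$; it is regular maximal if it is regular and no regular subgroup of $G$ properly contains it. A social preference function (SPF) is any $F:\mathcal{P}\to S_n$; for $U\leq G$, $F$ is $U$-symmetric if $F(p^{(\varphi,\psi)})=\psi F(p)$ for all $p\in\mathcal{P}$ and $(\varphi,\psi)\in U$. The symmetry group of $F$ is $G(F)=\{(\varphi,\psi)\in G: F(p^{(\varphi,\psi)})=\psi F(p)\ \forall p\}$; $U$ is a symmetry group with respect to $(h,n)$ if $U=G(F)$ for some SPF $F$. *)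

theory Defs
  imports "HOL-Combinatorics.Permutations" "HOL-Algebra.Group"
begin

text \<open>Voters are 0..<h, alternatives are 0..<n. A preference profile is a function
  assigning to each voter i < h a permutation of {..<n}; for canonicity it is the identity
  at indices i >= h.\<close>

definition profiles :: "nat \<Rightarrow> nat \<Rightarrow> (nat \<Rightarrow> nat \<Rightarrow> nat) set" where
  "profiles h n = {p. (\<forall>i<h. p i permutes {..<n}) \<and> (\<forall>i\<ge>h. p i = id)}"

definition Gcarrier :: "nat \<Rightarrow> nat \<Rightarrow> ((nat \<Rightarrow> nat) \<times> (nat \<Rightarrow> nat)) set" where
  "Gcarrier h n = {(\<phi>, \<psi>). \<phi> permutes {..<h} \<and> \<psi> permutes {..<n}}"

definition Ggrp :: "nat \<Rightarrow> nat \<Rightarrow> ((nat \<Rightarrow> nat) \<times> (nat \<Rightarrow> nat)) monoid" where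
  "Ggrp h n = \<lparr>carrier = Gcarrier h n,
               monoid.mult = (\<lambda>(\<phi>1, \<psi>1) (\<phi>2, \<psi>2). (\<phi>1 \<circ> \<phi>2, \<psi>1 \<circ> \<psi>2)),
               monoid.one = (id, id)\<rparr>"

definition act :: "nat \<Rightarrow> ((nat \<Rightarrow> nat) \<times> (nat \<Rightarrow> nat)) \<Rightarrow> (nat \<Rightarrow> nat \<Rightarrow> nat) \<Rightarrow> (nat \<Rightarrow> nat \<Rightarrow> nat)" where
  "act h g p = (\<lambda>i. if i < h then snd g \<circ> p (Hilbert_Choice.inv (fst g) i) else id)"

definition regular :: "nat \<Rightarrow> nat \<Rightarrow> ((nat \<Rightarrow> nat) \<times> (nat \<Rightarrow> nat)) set \<Rightarrow> bool" where
  "regular h n U \<longleftrightarrow> subgroup U (Ggrp h n) \<and>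
     (\<forall>p \<in> profiles h n. \<forall>g \<in> U. act h g p = p \<longrightarrow> snd g = id)"

definition regular_maximal :: "nat \<Rightarrow> nat \<Rightarrow> ((nat \<Rightarrow> nat) \<times> (nat \<Rightarrow> nat)) set \<Rightarrow> bool" where
  "regular_maximal h n U \<longleftrightarrow> regular h n U \<and>
     (\<forall>V. regular h n V \<and> U \<subseteq> V \<longrightarrow> V = U)"

text \<open>A social preference function: maps profiles to permutations of {..<n}
  (values outside profiles are irrelevant).\<close>
definition is_SPF :: "nat \<Rightarrow> nat \<Rightarrow> ((nat \<Rightarrow> nat \<Rightarrow> nat) \<Rightarrow> (nat \<Rightarrow> nat)) \<Rightarrow> bool" where
  "is_SPF h n F \<longleftrightarrow> (\<forall>p \<in> profiles h n. F p permutes {..<n})"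

definition U_symmetric :: "nat \<Rightarrow> nat \<Rightarrow> ((nat \<Rightarrow> nat) \<times> (nat \<Rightarrow> nat)) set
     \<Rightarrow> ((nat \<Rightarrow> nat \<Rightarrow> nat) \<Rightarrow> (nat \<Rightarrow> nat)) \<Rightarrow> bool" where
  "U_symmetric h n U F \<longleftrightarrow> (\<forall>p \<in> profiles h n. \<forall>g \<in> U. F (act h g p) = snd g \<circ> F p)"

definition symmetry_group_of :: "nat \<Rightarrow> nat \<Rightarrow> ((nat \<Rightarrow> nat \<Rightarrow> nat) \<Rightarrow> (nat \<Rightarrow> nat))
     \<Rightarrow> ((nat \<Rightarrow> nat) \<times> (nat \<Rightarrow> nat)) set" where
  "symmetry_group_of h n F = {g \<in> Gcarrier h n. \<forall>p \<in> profiles h n. F (act h g p) = snd g \<circ> F p}"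

definition is_symmetry_group :: "nat \<Rightarrow> nat \<Rightarrow> ((nat \<Rightarrow> nat) \<times> (nat \<Rightarrow> nat)) set \<Rightarrow> bool" where
  "is_symmetry_group h n U \<longleftrightarrow> (\<exists>F. is_SPF h n F \<and> U = symmetry_group_of h n F)"

end

theory Submission
  imports Defs
begin

lemma G_mult: "x \<otimes>\<^bsub>Ggrp h n\<^esub> y = (fst x \<circ> fst y, snd x \<circ> snd y)"
  by (cases x, cases y) (simp add: Ggrp_def)

lemma G_one: "\<one>\<^bsub>Ggrp h n\<^esub> = (id, id)"
  by (simp add: Ggrp_def)

lemma G_carrier: "carrier (Ggrp h n) = Gcarrier h n"
  by (simp add: Ggrp_def)

lemma G_group: "group (Ggrp h n)"
proof (rule groupI)
  fix x y assume "x \<in> carrier (Ggrp h n)" "y \<in> carrier (Ggrp h n)"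
  then show "x \<otimes>\<^bsub>Ggrp h n\<^esub> y \<in> carrier (Ggrp h n)"
    by (auto simp: G_mult G_carrier Gcarrier_def intro: permutes_compose)
next
  show "\<one>\<^bsub>Ggrp h n\<^esub> \<in> carrier (Ggrp h n)"
    by (simp add: G_one G_carrier Gcarrier_def)
next
  fix x y z
  show "x \<otimes>\<^bsub>Ggrp h n\<^esub> y \<otimes>\<^bsub>Ggrp h n\<^esub> z = x \<otimes>\<^bsub>Ggrp h n\<^esub> (y \<otimes>\<^bsub>Ggrp h n\<^esub> z)"
    by (simp add: G_mult o_assoc)
next
  fix x
  show "\<one>\<^bsub>Ggrp h n\<^esub> \<otimes>\<^bsub>Ggrp h n\<^esub> x = x" by (simp add: G_mult G_one)
next
  fix x assume "x \<in> carrier (Ggrp h n)"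
  then obtain a b where x: "x = (a, b)" "a permutes {..<h}" "b permutes {..<n}"
    by (auto simp: G_carrier Gcarrier_def)
  show "\<exists>y\<in>carrier (Ggrp h n). y \<otimes>\<^bsub>Ggrp h n\<^esub> x = \<one>\<^bsub>Ggrp h n\<^esub>"
    by (rule bexI[of _ "(Hilbert_Choice.inv a, Hilbert_Choice.inv b)"])
       (use x in \<open>auto simp: G_mult G_one G_carrier Gcarrier_def permutes_inv permutes_inv_o\<close>)
qed

lemma act_profile:
  assumes "p \<in> profiles h n" "g \<in> Gcarrier h n"
  shows "act h g p \<in> profiles h n"
proof -
  obtain a b where g: "g = (a, b)" "a permutes {..<h}" "b permutes {..<n}"
    using assms(2) by (auto simp: Gcarrier_def)
  have "Hilbert_Choice.inv a i < h" if "i < h" for i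
    using permutes_in_image[OF permutes_inv[OF g(2)]] that by auto
  then show ?thesis using assms(1) g
    by (auto simp: profiles_def act_def intro: permutes_compose)
qed

lemma act_one:
  assumes "p \<in> profiles h n"
  shows "act h (id, id) p = p"
  using assms by (auto simp: profiles_def act_def inv_id)

lemma act_mult:
  assumes "g1 \<in> Gcarrier h n" "g2 \<in> Gcarrier h n"
  shows "act h (g1 \<otimes>\<^bsub>Ggrp h n\<^esub> g2) p = act h g1 (act h g2 p)"
proof -
  obtain a b where g: "g1 = (a, b)" "a permutes {..<h}" "b permutes {..<n}"
    using assms(1) by (auto simp: Gcarrier_def)
  obtain c d where g2: "g2 = (c, d)" "c permutes {..<h}" "d permutes {..<n}"
    using assms(2) by (auto simp: Gcarrier_def)
  have lt: "Hilbert_Choice.inv a i < h" if "i < h" for i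
    using permutes_in_image[OF permutes_inv[OF g(2)]] that by auto
  have inv: "Hilbert_Choice.inv (a \<circ> c) = Hilbert_Choice.inv c \<circ> Hilbert_Choice.inv a"
    using o_inv_distrib permutes_bij g(2) g2(2) by blast
  show ?thesis
    by (rule ext) (auto simp: act_def G_mult g g2 inv lt)
qed

lemma symgroup_regular:
  assumes "is_SPF h n F"
  shows "regular h n (symmetry_group_of h n F)"
proof -
  let ?G = "Ggrp h n"
  let ?S = "symmetry_group_of h n F"
  interpret grp: group ?G by (rule G_group)
  have sub: "?S \<subseteq> carrier ?G" by (auto simp: symmetry_group_of_def G_carrier)
  have mult: "a \<otimes>\<^bsub>?G\<^esub> b \<in> ?S" if ab: "a \<in> ?S" "b \<in> ?S" for a b
  proof -
    have ac: "a \<in> Gcarrier h n" "b \<in> Gcarrier h n" using that by (auto simp: symmetry_group_of_def)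
    have "a \<otimes>\<^bsub>?G\<^esub> b \<in> Gcarrier h n" using grp.m_closed ac by (simp add: G_carrier)
    moreover have "F (act h (a \<otimes>\<^bsub>?G\<^esub> b) p) = snd (a \<otimes>\<^bsub>?G\<^esub> b) \<circ> F p"
      if p: "p \<in> profiles h n" for p
    proof -
      have "F (act h (a \<otimes>\<^bsub>?G\<^esub> b) p) = F (act h a (act h b p))" using act_mult ac by simp
      also have "\<dots> = snd a \<circ> F (act h b p)"
        using ab act_profile[OF p ac(2)] by (auto simp: symmetry_group_of_def)
      also have "\<dots> = snd a \<circ> (snd b \<circ> F p)"
        using ab p by (auto simp: symmetry_group_of_def)
      finally show ?thesis by (simp add: G_mult o_assoc)
    qed
    ultimately show ?thesis by (simp add: symmetry_group_of_def)
  qed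
  have inv: "inv\<^bsub>?G\<^esub> a \<in> ?S" if aS: "a \<in> ?S" for a
  proof -
    have ac: "a \<in> Gcarrier h n" using that by (auto simp: symmetry_group_of_def)
    define b where "b = inv\<^bsub>?G\<^esub> a"
    have bc: "b \<in> Gcarrier h n" using ac b_def grp.inv_closed by (simp add: G_carrier)
    have ab: "a \<otimes>\<^bsub>?G\<^esub> b = (id, id)" "b \<otimes>\<^bsub>?G\<^esub> a = (id, id)"
      using ac b_def grp.r_inv grp.l_inv by (simp_all add: G_carrier G_one)
    have "F (act h b p) = snd b \<circ> F p" if p: "p \<in> profiles h n" for p
    proof -
      define q where "q = act h b p"
      have q: "q \<in> profiles h n" using act_profile[OF p bc] q_def by simp
      have "act h a q = p" using act_mult[OF ac bc, of p] ab act_one[OF p] q_def by simp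
      then have "F p = snd a \<circ> F q" using aS q by (auto simp: symmetry_group_of_def)
      then have "snd b \<circ> F p = (snd b \<circ> snd a) \<circ> F q" by (simp add: o_assoc)
      also have "snd b \<circ> snd a = id" using ab(2) by (simp add: G_mult)
      finally show ?thesis using q_def by (simp add: comp_def)
    qed
    then show ?thesis using bc b_def by (simp add: symmetry_group_of_def)
  qed
  have one: "\<one>\<^bsub>?G\<^esub> \<in> ?S"
    by (auto simp: symmetry_group_of_def G_one Gcarrier_def act_one)
  have "subgroup ?S ?G"
    using grp.subgroupI[OF sub _ inv mult] one by blast
  moreover have "snd g = id" if "p \<in> profiles h n" "g \<in> ?S" "act h g p = p" for p g
  proof -
    have "F p = snd g \<circ> F p" using that by (auto simp: symmetry_group_of_def)
    moreover have "bij (F p)" using assms that(1) permutes_bij by (auto simp: is_SPF_def)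
    ultimately show ?thesis
    proof (intro ext)
      fix x assume e: "F p = snd g \<circ> F p" and b: "bij (F p)"
      obtain y where y: "x = F p y" using b by (metis bij_pointE)
      have "snd g (F p y) = F p y" using fun_cong[OF e, of y] by simp
      then show "snd g x = id x" using y by simp
    qed
  qed
  ultimately show ?thesis by (auto simp: regular_def)
qed

lemma part1:
  assumes "regular_maximal h n U" "is_SPF h n F" "U_symmetric h n U F"
  shows "symmetry_group_of h n F = U"
proof -
  have sg: "subgroup U (Ggrp h n)" using assms(1) by (simp add: regular_maximal_def regular_def)
  have "U \<subseteq> symmetry_group_of h n F"
    using subgroup.subset[OF sg] assms(3)
    by (auto simp: symmetry_group_of_def U_symmetric_def G_carrier)
  then show ?thesis using assms(1) symgroup_regular[OF assms(2)]
    by (simp add: regular_maximal_def)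
qed

lemma uniq_snd:
  assumes "regular h n U" "q \<in> profiles h n" "g1 \<in> U" "g2 \<in> U" "act h g1 q = act h g2 q"
  shows "snd g1 = snd g2"
proof -
  let ?G = "Ggrp h n"
  interpret grp: group ?G by (rule G_group)
  have sg: "subgroup U ?G" using assms(1) by (simp add: regular_def)
  have c: "g1 \<in> carrier ?G" "g2 \<in> carrier ?G" using subgroup.subset[OF sg] assms by auto
  define k where "k = inv\<^bsub>?G\<^esub> g2 \<otimes>\<^bsub>?G\<^esub> g1"
  have kU: "k \<in> U" using sg assms k_def by (simp add: subgroup.m_closed subgroup.m_inv_closed)
  have ic: "inv\<^bsub>?G\<^esub> g2 \<in> carrier ?G" using c by simp
  have "act h k q = act h (inv\<^bsub>?G\<^esub> g2) (act h g2 q)"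
    using act_mult ic c assms(5) k_def by (simp add: G_carrier)
  also have "\<dots> = act h (inv\<^bsub>?G\<^esub> g2 \<otimes>\<^bsub>?G\<^esub> g2) q"
    using act_mult[of "inv\<^bsub>?G\<^esub> g2" h n g2 q] ic c unfolding G_carrier by metis
  also have "\<dots> = q" using c act_one[OF assms(2)] by (simp add: G_one)
  finally have "snd k = id" using assms(1,2) kU by (auto simp: regular_def)
  moreover have "g2 \<otimes>\<^bsub>?G\<^esub> k = g1" using c k_def
    by (simp add: grp.m_assoc[symmetric])
  ultimately show ?thesis by (metis G_mult comp_id snd_conv)
qed

lemma part2:
  assumes "regular_maximal h n U"
  shows "is_symmetry_group h n U"
proof -
  let ?G = "Ggrp h n"
  interpret grp: group ?G by (rule G_group)
  have reg: "regular h n U" using assms by (simp add: regular_maximal_def)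
  have sg: "subgroup U ?G" using reg by (simp add: regular_def)
  have UC: "g \<in> Gcarrier h n" if "g \<in> U" for g using subgroup.subset[OF sg] that by (auto simp: G_carrier)
  define orb where "orb p = {act h g p | g. g \<in> U}" for p
  have orbE: "\<exists>g\<in>U. q = act h g p" if "q \<in> orb p" for p q
    using that unfolding orb_def by blast
  have refl: "p \<in> orb p" if "p \<in> profiles h n" for p
    using act_one[OF that] subgroup.one_closed[OF sg] unfolding orb_def by (force simp: G_one)
  have trans: "r \<in> orb p" if tq: "q \<in> orb p" "r \<in> orb q" for p q r
  proof -
    obtain g1 where g1: "g1 \<in> U" "q = act h g1 p" using tq(1) unfolding orb_def by blast
    obtain g2 where g2: "g2 \<in> U" "r = act h g2 q" using tq(2) unfolding orb_def by blast
    have "r = act h (g2 \<otimes>\<^bsub>?G\<^esub> g1) p" using act_mult UC g1 g2 by simp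
    moreover have "g2 \<otimes>\<^bsub>?G\<^esub> g1 \<in> U" using g1 g2 sg by (simp add: subgroup.m_closed)
    ultimately show ?thesis unfolding orb_def by blast
  qed
  have sym: "p \<in> orb q" if sq: "q \<in> orb p" "p \<in> profiles h n" for p q
  proof -
    obtain g where g: "g \<in> U" "q = act h g p" using sq(1) unfolding orb_def by blast
    have gc: "g \<in> carrier ?G" using UC g by (simp add: G_carrier)
    have ic: "inv\<^bsub>?G\<^esub> g \<in> U" using sg g by (simp add: subgroup.m_inv_closed)
    have "act h (inv\<^bsub>?G\<^esub> g) q = act h (inv\<^bsub>?G\<^esub> g \<otimes>\<^bsub>?G\<^esub> g) p"
      using act_mult UC ic g by simp
    also have "\<dots> = p" using gc act_one[OF sq(2)] by (simp add: G_one)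
    finally show ?thesis using ic unfolding orb_def by blast
  qed
  have orbprof: "q \<in> profiles h n" if "q \<in> orb p" "p \<in> profiles h n" for p q
    using that act_profile UC by (auto simp: orb_def)
  define rep where "rep p = (SOME q. q \<in> orb p)" for p
  have rep_in: "rep p \<in> orb p" if "p \<in> profiles h n" for p
    unfolding rep_def using someI[of "\<lambda>q. q \<in> orb p" p] refl[OF that] by blast
  have orb_eq: "orb q = orb p" if "q \<in> orb p" "p \<in> profiles h n" for p q
    using trans sym that orbprof by blast
  have rep_eq: "rep q = rep p" if "q \<in> orb p" "p \<in> profiles h n" for p q
    using orb_eq[OF that] by (simp add: rep_def)
  define sel where "sel p = (SOME g. g \<in> U \<and> act h g (rep p) = p)" for p
  have sel: "sel p \<in> U \<and> act h (sel p) (rep p) = p" if "p \<in> profiles h n" for p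
  proof -
    have "p \<in> orb (rep p)" using sym rep_in that by blast
    then obtain g where "g \<in> U" "p = act h g (rep p)" using orbE by blast
    then have "g \<in> U \<and> act h g (rep p) = p" by simp
    then show ?thesis unfolding sel_def by (rule someI[where P="\<lambda>g. g \<in> U \<and> act h g (rep p) = p"])
  qed
  define F where "F p = snd (sel p)" for p
  have spf: "is_SPF h n F"
    unfolding is_SPF_def
  proof
    fix p assume p: "p \<in> profiles h n"
    have "sel p \<in> Gcarrier h n" using sel[OF p] UC by blast
    then show "F p permutes {..<n}" unfolding F_def Gcarrier_def by auto
  qed
  have usym: "U_symmetric h n U F"
    unfolding U_symmetric_def
  proof (intro ballI)
    fix p g assume p: "p \<in> profiles h n" and g: "g \<in> U"
    let ?q = "act h g p"
    have qo: "?q \<in> orb p" using g unfolding orb_def by blast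
    have q: "?q \<in> profiles h n" using act_profile p UC g by simp
    have rq: "rep ?q = rep p" using rep_eq[OF qo p] .
    have rp: "rep p \<in> profiles h n" using rep_in[OF p] orbprof p by blast
    have sp: "sel p \<in> U" "act h (sel p) (rep p) = p" using sel[OF p] by auto
    have sq: "sel ?q \<in> U" "act h (sel ?q) (rep ?q) = ?q" using sel[OF q] by auto
    have e1: "act h (g \<otimes>\<^bsub>?G\<^esub> sel p) (rep p) = ?q"
      using act_mult[OF UC[OF g] UC[OF sp(1)]] sp(2) by simp
    have e2: "g \<otimes>\<^bsub>?G\<^esub> sel p \<in> U" using sg g sp(1) by (simp add: subgroup.m_closed)
    have "snd (sel ?q) = snd (g \<otimes>\<^bsub>?G\<^esub> sel p)"
    proof (rule uniq_snd[OF reg rp sq(1) e2])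
      show "act h (sel ?q) (rep p) = act h (g \<otimes>\<^bsub>?G\<^esub> sel p) (rep p)"
        using sq(2) rq e1 by simp
    qed
    then show "F ?q = snd g \<circ> F p" by (simp add: F_def G_mult)
  qed
  show ?thesis using part1[OF assms spf usym] spf by (auto simp: is_symmetry_group_def)
qed

theorem mainTheorem10:
  fixes h n :: nat
  assumes "h \<ge> 2" and "n \<ge> 2"
  shows "(\<forall>U. regular_maximal h n U \<longrightarrow>
            (\<forall>F. is_SPF h n F \<and> U_symmetric h n U F \<longrightarrow> symmetry_group_of h n F = U))
       \<and> (\<forall>U. regular_maximal h n U \<longrightarrow> is_symmetry_group h n U)
       \<and> (\<forall>U. is_symmetry_group h n U \<longrightarrow> regular h n U)
       \<and> {U. is_symmetry_group h n U} \<noteq> {}"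
proof (intro conjI allI impI)
  fix U F assume "regular_maximal h n U" "is_SPF h n F \<and> U_symmetric h n U F"
  then show "symmetry_group_of h n F = U" using part1 by blast
next
  fix U assume "regular_maximal h n U"
  then show "is_symmetry_group h n U" by (rule part2)
next
  fix U assume "is_symmetry_group h n U"
  then show "regular h n U" using symgroup_regular by (auto simp: is_symmetry_group_def)
next
  have "is_SPF h n (\<lambda>p. id)" by (simp add: is_SPF_def)
  then have "is_symmetry_group h n (symmetry_group_of h n (\<lambda>p. id))"
    by (auto simp: is_symmetry_group_def)
  then show "{U. is_symmetry_group h n U} \<noteq> {}" by blast
qed

end
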